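(* For every set $P$ of $n$ points in the plane, the unit disk graph $\mathrm{UDG}(P)$ has a spanning subgraph $H$ with at most $9n$ edges such that for every edge $(p,q)$ of $\mathrm{UDG}(P)$, the hop distance between $p$ and $q$ in $H$ is at most $5$.
   Context: For a finite point set $P$ in the plane, the unit disk graph $\mathrm{UDG}(P)$ is the graph with vertex set $P$ having an edge between $p,q\in P$ if and only if the Euclidean distance $|pq|\le 1$. The hop distance between two vertices of a graph $H$ is the minimum number of edges on a path between them in $H$. *)

theory Defs
  imports "HOL-Analysis.Analysis" "HOL-Library.Extended_Nat"
begin

type_synonym point = "real ^ 2"

definition udg_edges :: "point set \<Rightarrow> point set set" where
  "udg_edges P = {{p, q} | p q. p \<in> P \<and> q \<in> P \<and> p \<noteq> q \<and> dist p q \<le> 1}"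

definition is_walk :: "'a set set \<Rightarrow> 'a list \<Rightarrow> bool" where
  "is_walk E xs \<longleftrightarrow> xs \<noteq> [] \<and> (\<forall>i < length xs - 1. {xs ! i, xs ! Suc i} \<in> E)"

definition hop_dist :: "'a set set \<Rightarrow> 'a \<Rightarrow> 'a \<Rightarrow> enat" where
  "hop_dist E p q = (INF xs \<in> {xs. is_walk E xs \<and> hd xs = p \<and> last xs = q}.
                        enat (length xs - 1))"

end

theory Submission imports Defs begin

definition cellof :: "point \<Rightarrow> int \<times> int" where
  "cellof p = (\<lfloor>sqrt 2 * p$1\<rfloor>, \<lfloor>sqrt 2 * p$2\<rfloor>)"

lemma dist_le1: "dist (p::point) q \<le> 1 \<longleftrightarrow> (p$1-q$1)^2 + (p$2-q$2)^2 \<le> 1"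
  by (simp add: dist_vec_def L2_set_def sum_2 dist_real_def)

lemma dist_lt1: "dist (p::point) q < 1 \<longleftrightarrow> (p$1-q$1)^2 + (p$2-q$2)^2 < 1"
  by (simp add: dist_vec_def L2_set_def sum_2 dist_real_def)

lemma floor_diff_bounds:
  fixes x y :: real
  shows "real_of_int (\<lfloor>y\<rfloor> - \<lfloor>x\<rfloor>) < y - x + 1" "real_of_int (\<lfloor>y\<rfloor> - \<lfloor>x\<rfloor>) > y - x - 1"
  using floor_correct[of x] floor_correct[of y] unfolding of_int_diff by linarith+

lemma sq_lt: "(x::real)^2 \<le> 2 \<Longrightarrow> x < 3/2 \<and> x > -3/2"
proof (rule ccontr)
  assume h: "(x::real)^2 \<le> 2" "\<not> (x < 3/2 \<and> x > -3/2)"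
  then have "3/2 \<le> \<bar>x\<bar>" by linarith
  then have "(3/2)^2 \<le> \<bar>x\<bar>^2" by (rule power_mono) auto
  then show False using h(1) unfolding power2_eq_square by linarith
qed

lemma sq2: "(sqrt 2 * x - sqrt 2 * y)^2 = 2 * (x - y)^2"
proof -
  have "sqrt 2 * x - sqrt 2 * y = sqrt 2 * (x - y)" by (simp add: right_diff_distrib)
  then show ?thesis by (simp add: power_mult_distrib)
qed

lemma same_cell:
  fixes p q :: point
  assumes "cellof p = cellof q" shows "dist p q < 1"
proof -
  let ?a = "sqrt 2 * p$1" and ?b = "sqrt 2 * q$1" and ?c = "sqrt 2 * p$2" and ?d = "sqrt 2 * q$2"
  have e: "real_of_int \<lfloor>?a\<rfloor> = real_of_int \<lfloor>?b\<rfloor>" "real_of_int \<lfloor>?c\<rfloor> = real_of_int \<lfloor>?d\<rfloor>"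
    using assms unfolding cellof_def prod.inject of_int_eq_iff by blast+
  have 1: "\<bar>?a - ?b\<bar> < 1" "\<bar>?c - ?d\<bar> < 1" 
    using e floor_correct[of ?a] floor_correct[of ?b] floor_correct[of ?c] floor_correct[of ?d]
    unfolding abs_less_iff by linarith+
  have "(?a - ?b)^2 < 1" "(?c - ?d)^2 < 1" using 1
    by (simp_all add: abs_square_less_1)
  hence "(?a - ?b)^2 + (?c - ?d)^2 < 2" by simp
  moreover have "(?a - ?b)^2 + (?c - ?d)^2 = 2 * ((p$1-q$1)^2 + (p$2-q$2)^2)"
    by (simp only: sq2 distrib_left)
  ultimately show ?thesis unfolding dist_lt1 by simp
qed

lemma sq_scaled:
  fixes p q :: point
  assumes "dist p q \<le> 1"
  shows "(sqrt 2 * q$1 - sqrt 2 * p$1)^2 + (sqrt 2 * q$2 - sqrt 2 * p$2)^2 \<le> 2"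
proof -
  have "(sqrt 2 * q$1 - sqrt 2 * p$1)^2 + (sqrt 2 * q$2 - sqrt 2 * p$2)^2 = 2 * ((p$1-q$1)^2 + (p$2-q$2)^2)"
    by (simp only: sq2 distrib_left power2_commute)
  thus ?thesis using assms unfolding dist_le1 by simp
qed

definition Fwd :: "(int \<times> int) set" where
  "Fwd = {(1,-2),(1,-1),(1,0),(1,1),(1,2),(2,-1),(2,0),(2,1),(0,1),(0,2)}"

lemma card_Fwd: "card Fwd = 10" by (simp add: Fwd_def)

lemma offset_fwd:
  fixes p q :: point
  assumes "dist p q \<le> 1" "cellof p \<noteq> cellof q"
  shows "cellof q - cellof p \<in> Fwd \<or> cellof p - cellof q \<in> Fwd"
proof -
  define x1 where "x1 = sqrt 2 * p$1"
  define y1 where "y1 = sqrt 2 * q$1"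
  define x2 where "x2 = sqrt 2 * p$2"
  define y2 where "y2 = sqrt 2 * q$2"
  define a where "a = \<lfloor>y1\<rfloor> - \<lfloor>x1\<rfloor>"
  define b where "b = \<lfloor>y2\<rfloor> - \<lfloor>x2\<rfloor>"
  have s: "(y1 - x1)^2 + (y2 - x2)^2 \<le> 2" using sq_scaled[OF assms(1)]
    by (simp add: x1_def x2_def y1_def y2_def)
  have s1: "(y1 - x1)^2 \<le> 2" "(y2 - x2)^2 \<le> 2" using s zero_le_power2[of "y1-x1"] zero_le_power2[of "y2-x2"] by linarith+
  have fa: "real_of_int a < y1 - x1 + 1" "real_of_int a > y1 - x1 - 1"
    using floor_diff_bounds a_def by auto
  have fb: "real_of_int b < y2 - x2 + 1" "real_of_int b > y2 - x2 - 1"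
    using floor_diff_bounds b_def by auto
  have ab: "-2 \<le> a" "a \<le> 2" "-2 \<le> b" "b \<le> 2"
    using fa fb sq_lt[OF s1(1)] sq_lt[OF s1(2)] by linarith+
  have n22: "\<not> (\<bar>a\<bar> = 2 \<and> \<bar>b\<bar> = 2)"
  proof
    assume h: "\<bar>a\<bar> = 2 \<and> \<bar>b\<bar> = 2"
    hence "\<bar>y1 - x1\<bar> > 1" "\<bar>y2 - x2\<bar> > 1" using fa fb by linarith+
    hence "(y1 - x1)^2 > 1" "(y2 - x2)^2 > 1"
      by (metis abs_le_square_iff abs_one less_le_not_le one_power2 power2_abs less_le)+
    with s show False by linarith
  qed
  have ne: "(a,b) \<noteq> (0,0)" using assms(2) unfolding cellof_def a_def b_def x1_def x2_def y1_def y2_def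
    by auto
  have "(a,b) \<in> Fwd \<or> (-a,-b) \<in> Fwd"
  proof -
    have "a = -2 \<or> a = -1 \<or> a = 0 \<or> a = 1 \<or> a = 2" "b = -2 \<or> b = -1 \<or> b = 0 \<or> b = 1 \<or> b = 2"
      using ab by linarith+
    then show ?thesis using n22 ne unfolding Fwd_def by (elim disjE) simp_all
  qed
  moreover have "cellof q - cellof p = (a,b)"
    unfolding cellof_def a_def b_def x1_def x2_def y1_def y2_def by (simp only: diff_Pair)
  moreover have "cellof p - cellof q = (-a,-b)"
    unfolding cellof_def a_def b_def x1_def x2_def y1_def y2_def by (simp only: diff_Pair minus_diff_eq)
  ultimately show ?thesis by metis
qed

lemma exclusive:
  fixes p q r :: point
  assumes "dist p q \<le> 1" "dist p r \<le> 1"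
    "cellof q - cellof p = (1,2)" "cellof r - cellof p = (1,-2)"
  shows False
proof -
  define x2 where "x2 = sqrt 2 * p$2"
  define y2 where "y2 = sqrt 2 * q$2"
  define z2 where "z2 = sqrt 2 * r$2"
  have s: "(y2 - x2)^2 \<le> 2" "(z2 - x2)^2 \<le> 2"
    using sq_scaled[OF assms(1)] sq_scaled[OF assms(2)] unfolding x2_def y2_def z2_def
    using zero_le_power2[of "sqrt 2 * q$1 - sqrt 2 * p$1"] zero_le_power2[of "sqrt 2 * r$1 - sqrt 2 * p$1"] by linarith+
  have "\<lfloor>y2\<rfloor> = \<lfloor>x2\<rfloor> + 2" "\<lfloor>z2\<rfloor> = \<lfloor>x2\<rfloor> - 2"
    using assms(3,4) unfolding cellof_def x2_def y2_def z2_def by auto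
  hence "real_of_int \<lfloor>y2\<rfloor> = real_of_int \<lfloor>x2\<rfloor> + 2" "real_of_int \<lfloor>z2\<rfloor> = real_of_int \<lfloor>x2\<rfloor> - 2" by simp_all
  hence "y2 - z2 > 3" using floor_correct[of y2] floor_correct[of z2] floor_correct[of x2] by linarith
  with sq_lt[OF s(1)] sq_lt[OF s(2)] show False by linarith
qed


fun okw :: "'a set set \<Rightarrow> 'a list \<Rightarrow> bool" where
  "okw E (x # y # zs) = ((x = y \<or> {x, y} \<in> E) \<and> okw E (y # zs))"
| "okw E _ = True"

lemma is_walk_Cons:
  "ys \<noteq> [] \<Longrightarrow> is_walk E (x # ys) \<longleftrightarrow> {x, hd ys} \<in> E \<and> is_walk E ys"
  unfolding is_walk_def
  apply (cases ys)
   apply simp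
  apply (auto simp: nth_Cons less_Suc_eq_0_disj split: nat.splits)
  done

lemma okw_walk:
  "xs \<noteq> [] \<Longrightarrow> okw E xs \<Longrightarrow>
   \<exists>ys. is_walk E ys \<and> hd ys = hd xs \<and> last ys = last xs \<and> length ys \<le> length xs"
proof (induction E xs rule: okw.induct)
  case (1 E x y zs)
  then obtain ys where ys: "is_walk E ys" "hd ys = y" "last ys = last (y # zs)"
    "length ys \<le> length (y # zs)" by auto
  have ne: "ys \<noteq> []" using ys(1) unfolding is_walk_def by simp
  show ?case
  proof (cases "x = y")
    case True
    then show ?thesis using ys by (intro exI[of _ ys]) auto
  next
    case False
    then have "{x, y} \<in> E" using "1.prems" by simp
    then show ?thesis using ys ne
      by (intro exI[of _ "x # ys"]) (auto simp: is_walk_Cons)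
  qed
next
  case ("2_1" E)
  then show ?case by simp
next
  case ("2_2" E v)
  then show ?case by (intro exI[of _ "[v]"]) (auto simp: is_walk_def)
qed

lemma okw_hop:
  assumes "okw E xs" "xs \<noteq> []" "hd xs = p" "last xs = q" "length xs \<le> 6"
  shows "hop_dist E p q \<le> 5"
proof -
  obtain ys where ys: "is_walk E ys" "hd ys = p" "last ys = q" "length ys \<le> 6"
    using okw_walk[OF assms(2,1)] assms by force
  have "hop_dist E p q \<le> enat (length ys - 1)"
    unfolding hop_dist_def using ys by (intro INF_lower) auto
  also have "\<dots> \<le> 5" using ys(4) by (simp add: numeral_eq_enat)
  finally show ?thesis .
qed


theorem theorem3:
  fixes P :: "point set" and n :: nat
  assumes "finite P" and "card P = n"
  shows "\<exists>H. H \<subseteq> udg_edges P \<and> card H \<le> 9 * n \<and>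
             (\<forall>p q. {p, q} \<in> udg_edges P \<longrightarrow> hop_dist H p q \<le> 5)"
proof -
  define C where "C = cellof ` P"
  define Pc where "Pc c = {p \<in> P. cellof p = c}" for c
  define z where "z c = (SOME p. p \<in> P \<and> cellof p = c)" for c
  define conn where "conn c d = (\<exists>p q. p \<in> P \<and> q \<in> P \<and> cellof p = c \<and> cellof q = d \<and> dist p q \<le> 1)" for c d
  define br where "br c d = (SOME e. \<exists>p q. e = {p, q} \<and> p \<in> P \<and> q \<in> P \<and> cellof p = c \<and> cellof q = d \<and> dist p q \<le> 1)" for c d
  define R where "R c = {d. d - c \<in> Fwd \<and> conn c d}" for c
  define S where "S c = (\<lambda>p. {p, z c}) ` (Pc c - {z c})" for c
  define H where "H = (\<Union>c\<in>C. S c) \<union> (\<Union>c\<in>C. br c ` R c)"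
  have finC: "finite C" using assms(1) C_def by simp
  have z: "z c \<in> P" "cellof (z c) = c" if "c \<in> C" for c
  proof -
    have "\<exists>p. p \<in> P \<and> cellof p = c" using that C_def by auto
    then have "z c \<in> P \<and> cellof (z c) = c" unfolding z_def by (rule someI_ex)
    then show "z c \<in> P" "cellof (z c) = c" by auto
  qed
  have br: "\<exists>u v. br c d = {u, v} \<and> u \<in> P \<and> v \<in> P \<and> cellof u = c \<and> cellof v = d \<and> dist u v \<le> 1"
    if "d \<in> R c" for c d
  proof -
    have "\<exists>e. \<exists>p q. e = {p, q} \<and> p \<in> P \<and> q \<in> P \<and> cellof p = c \<and> cellof q = d \<and> dist p q \<le> 1"
      using that unfolding R_def conn_def by blast
    then show ?thesis unfolding br_def by (rule someI_ex)
  qed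
  have F0: "(0::int\<times>int) \<notin> Fwd" by (simp add: Fwd_def zero_prod_def)
  have Hsub: "H \<subseteq> udg_edges P"
  proof
    fix e assume "e \<in> H"
    then consider (s) c where "c \<in> C" "e \<in> S c" | (b) c d where "c \<in> C" "d \<in> R c" "e = br c d"
      unfolding H_def by auto
    then show "e \<in> udg_edges P"
    proof cases
      case s
      then obtain p where p: "p \<in> P" "cellof p = c" "p \<noteq> z c" "e = {p, z c}"
        unfolding S_def Pc_def by auto
      have "dist p (z c) \<le> 1" using same_cell[of p "z c"] p(2) z(2)[OF s(1)] by simp
      then show ?thesis unfolding udg_edges_def using p z(1)[OF s(1)] by blast
    next
      case b
      then obtain u v where uv: "e = {u, v}" "u \<in> P" "v \<in> P" "cellof u = c" "cellof v = d" "dist u v \<le> 1"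
        using br by blast
      have "d - c \<in> Fwd" using b R_def by auto
      then have "u \<noteq> v" using uv F0 by auto
      then show ?thesis unfolding udg_edges_def using uv by blast
    qed
  qed
  have star: "x = z (cellof x) \<or> {x, z (cellof x)} \<in> H" if "x \<in> P" for x
  proof -
    have "cellof x \<in> C" using that C_def by auto
    moreover have "x \<noteq> z (cellof x) \<Longrightarrow> {x, z (cellof x)} \<in> S (cellof x)"
      unfolding S_def Pc_def using that by auto
    ultimately show ?thesis unfolding H_def by blast
  qed
  have bridge: "\<exists>u v. {u, v} \<in> H \<and> u \<in> P \<and> v \<in> P \<and> cellof u = cellof p \<and> cellof v = cellof q"
    if "p \<in> P" "q \<in> P" "dist p q \<le> 1" "cellof p \<noteq> cellof q" for p q
  proof -
    from offset_fwd[OF that(3,4)] show ?thesis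
    proof
      assume a: "cellof q - cellof p \<in> Fwd"
      have "cellof q \<in> R (cellof p)" unfolding R_def conn_def using a that by blast
      moreover have "cellof p \<in> C" using that C_def by auto
      ultimately have "br (cellof p) (cellof q) \<in> H" unfolding H_def by blast
      moreover obtain u v where "br (cellof p) (cellof q) = {u, v}" "u \<in> P" "v \<in> P"
        "cellof u = cellof p" "cellof v = cellof q"
        using br[OF \<open>cellof q \<in> R (cellof p)\<close>] by blast
      ultimately show ?thesis by auto
    next
      assume a: "cellof p - cellof q \<in> Fwd"
      have "dist q p \<le> 1" using that(3) by (simp add: dist_commute)
      then have "cellof p \<in> R (cellof q)" unfolding R_def conn_def using a that(1,2) by blast
      moreover have "cellof q \<in> C" using that C_def by auto
      ultimately have "br (cellof q) (cellof p) \<in> H" unfolding H_def by blast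
      moreover obtain u v where "br (cellof q) (cellof p) = {u, v}" "u \<in> P" "v \<in> P"
        "cellof u = cellof q" "cellof v = cellof p"
        using br[OF \<open>cellof p \<in> R (cellof q)\<close>] by blast
      ultimately have "{v, u} \<in> H \<and> v \<in> P \<and> u \<in> P \<and> cellof v = cellof p \<and> cellof u = cellof q"
        by (auto simp: insert_commute)
      then show ?thesis by blast
    qed
  qed
  have flip: "z (cellof x) = x \<or> {z (cellof x), x} \<in> H" if "x \<in> P" for x
    using star[OF that] by (metis insert_commute)
  have hop: "hop_dist H p q \<le> 5" if hp: "p \<in> P" "q \<in> P" "dist p q \<le> 1" for p q
  proof (cases "cellof p = cellof q")
    case True
    have s1: "p = z (cellof p) \<or> {p, z (cellof p)} \<in> H" by (rule star[OF hp(1)])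
    have s2: "z (cellof p) = q \<or> {z (cellof p), q} \<in> H" using flip[OF hp(2)] True by simp
    have "okw H [p, z (cellof p), q]" using s1 s2 by simp
    then show ?thesis by (rule okw_hop) auto
  next
    case False
    obtain u v where uv: "{u, v} \<in> H" "u \<in> P" "v \<in> P" "cellof u = cellof p" "cellof v = cellof q"
      using bridge[OF hp False] by blast
    have s1: "p = z (cellof p) \<or> {p, z (cellof p)} \<in> H" by (rule star[OF hp(1)])
    have s2: "z (cellof p) = u \<or> {z (cellof p), u} \<in> H" using flip[OF uv(2)] uv(4) by simp
    have s4: "v = z (cellof q) \<or> {v, z (cellof q)} \<in> H" using star[OF uv(3)] uv(5) by simp
    have s5: "z (cellof q) = q \<or> {z (cellof q), q} \<in> H" by (rule flip[OF hp(2)])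
    have "okw H [p, z (cellof p), u, v, z (cellof q), q]"
      using s1 s2 uv(1) s4 s5 by simp
    then show ?thesis by (rule okw_hop) auto
  qed
  have hopall: "\<forall>p q. {p, q} \<in> udg_edges P \<longrightarrow> hop_dist H p q \<le> 5"
  proof (intro allI impI)
    fix p q assume "{p, q} \<in> udg_edges P"
    then obtain a b where ab: "{p, q} = {a, b}" "a \<in> P" "b \<in> P" "dist a b \<le> 1"
      unfolding udg_edges_def by blast
    then have "(p = a \<and> q = b) \<or> (p = b \<and> q = a)" by (simp add: doubleton_eq_iff)
    then show "hop_dist H p q \<le> 5"
    proof
      assume "p = a \<and> q = b" then show ?thesis using hop ab by blast
    next
      assume "p = b \<and> q = a" then show ?thesis using hop[of b a] ab by (simp add: dist_commute)
    qed
  qed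
  have finPc: "finite (Pc c)" for c using assms(1) Pc_def by simp
  have Pc_ne: "card (Pc c) \<ge> 1" if "c \<in> C" for c
  proof -
    have "z c \<in> Pc c" using z[OF that] Pc_def by simp
    then show ?thesis using finPc card_0_eq[of "Pc c"] by fastforce
  qed
  have cardS: "card (S c) \<le> card (Pc c) - 1" if "c \<in> C" for c
  proof -
    have "z c \<in> Pc c" using z[OF that] Pc_def by simp
    then have "card (Pc c - {z c}) = card (Pc c) - 1" using finPc by simp
    then show ?thesis unfolding S_def using card_image_le finPc by (metis finite_Diff)
  qed
  have finR: "finite (R c)" and Rsub: "R c \<subseteq> (\<lambda>w. c + w) ` Fwd" for c
  proof -
    show "R c \<subseteq> (\<lambda>w. c + w) ` Fwd" unfolding R_def
    proof
      fix d assume "d \<in> {d. d - c \<in> Fwd \<and> conn c d}"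
      then have "d - c \<in> Fwd" by simp
      moreover have "d = c + (d - c)" by simp
      ultimately show "d \<in> (\<lambda>w. c + w) ` Fwd" by blast
    qed
    then show "finite (R c)" by (rule finite_subset) (simp add: Fwd_def)
  qed
  have cardR: "card (R c) \<le> 10" for c
  proof -
    have "card (R c) \<le> card ((\<lambda>w. c + w) ` Fwd)"
      using Rsub by (intro card_mono) (auto simp: Fwd_def)
    also have "\<dots> \<le> card Fwd" by (rule card_image_le) (simp add: Fwd_def)
    finally show ?thesis using card_Fwd by simp
  qed
  have cardR1: "card (R c) \<le> 9" if "c \<in> C" "card (Pc c) = 1" for c
  proof -
    obtain p where Pp: "Pc c = {p}" using \<open>card (Pc c) = 1\<close> card_1_singletonE by blast
    have not_both: "\<not> (c + (1,2) \<in> R c \<and> c + (1,-2) \<in> R c)"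
    proof
      assume h: "c + (1,2) \<in> R c \<and> c + (1,-2) \<in> R c"
      then obtain p1 q where 1: "p1 \<in> P" "q \<in> P" "cellof p1 = c" "cellof q = c + (1,2)" "dist p1 q \<le> 1"
        unfolding R_def conn_def by blast
      obtain p2 r where 2: "p2 \<in> P" "r \<in> P" "cellof p2 = c" "cellof r = c + (1,-2)" "dist p2 r \<le> 1"
        using h unfolding R_def conn_def by blast
      have "p1 \<in> Pc c" "p2 \<in> Pc c" using 1 2 Pc_def by auto
      then have "p1 = p" "p2 = p" using Pp by auto
      have d1: "cellof q - cellof p = (1,2)" using 1(3,4) \<open>p1 = p\<close> by simp
      have d2: "cellof r - cellof p = (1,-2)" using 2(3,4) \<open>p2 = p\<close> by simp
      show False using exclusive[OF _ _ d1 d2] 1(5) 2(5) \<open>p1 = p\<close> \<open>p2 = p\<close> by blast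
    qed
    have gen: "R c \<subseteq> (\<lambda>w. c + w) ` (Fwd - {y})" if "c + y \<notin> R c" for y
    proof
      fix d assume "d \<in> R c"
      then obtain w where "w \<in> Fwd" "d = c + w" using Rsub[of c] by blast
      then show "d \<in> (\<lambda>w. c + w) ` (Fwd - {y})" using that \<open>d \<in> R c\<close> by blast
    qed
    obtain x where x: "x \<in> Fwd" "R c \<subseteq> (\<lambda>w. c + w) ` (Fwd - {x})"
    proof (cases "c + (1,2) \<in> R c")
      case True
      then have "c + (1,-2) \<notin> R c" using not_both by blast
      show ?thesis by (rule that[of "(1,-2)", OF _ gen[OF \<open>c + (1,-2) \<notin> R c\<close>]]) (simp add: Fwd_def)
    next
      case False
      show ?thesis by (rule that[of "(1,2)", OF _ gen[OF False]]) (simp add: Fwd_def)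
    qed
    have "card (R c) \<le> card ((\<lambda>w. c + w) ` (Fwd - {x}))"
      using x(2) by (intro card_mono) (auto simp: Fwd_def)
    also have "\<dots> \<le> card (Fwd - {x})" by (rule card_image_le) (simp add: Fwd_def)
    also have "\<dots> = 9" using x(1) card_Fwd by (simp add: Fwd_def)
    finally show ?thesis .
  qed
  have percell: "card (Pc c) - 1 + card (R c) \<le> 9 * card (Pc c)" if "c \<in> C" for c
  proof (cases "card (Pc c) = 1")
    case True then show ?thesis using cardR1[OF that] by simp
  next
    case False
    then have "card (Pc c) \<ge> 2" using Pc_ne[OF that] by linarith
    then show ?thesis using cardR[of c] by linarith
  qed
  have PU: "P = (\<Union>c\<in>C. Pc c)" unfolding C_def Pc_def by auto
  have nsum: "n = (\<Sum>c\<in>C. card (Pc c))"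
  proof -
    have "card (\<Union>c\<in>C. Pc c) = (\<Sum>c\<in>C. card (Pc c))"
      using finC finPc by (intro card_UN_disjoint) (auto simp: Pc_def)
    then show ?thesis using PU assms(2) by simp
  qed
  have finS: "finite (S c)" for c unfolding S_def using finPc by simp
  have "card H \<le> card (\<Union>c\<in>C. S c) + card (\<Union>c\<in>C. br c ` R c)"
    unfolding H_def by (rule card_Un_le)
  also have "\<dots> \<le> (\<Sum>c\<in>C. card (S c)) + (\<Sum>c\<in>C. card (br c ` R c))"
    using finC by (intro add_mono card_UN_le)
  also have "\<dots> \<le> (\<Sum>c\<in>C. card (Pc c) - 1) + (\<Sum>c\<in>C. card (R c))"
    using cardS finR by (intro add_mono sum_mono card_image_le) auto
  also have "\<dots> = (\<Sum>c\<in>C. card (Pc c) - 1 + card (R c))"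
    by (simp add: sum.distrib)
  also have "\<dots> \<le> (\<Sum>c\<in>C. 9 * card (Pc c))"
    using percell by (intro sum_mono) auto
  also have "\<dots> = 9 * n" using nsum by (simp add: sum_distrib_left)
  finally have "card H \<le> 9 * n" .
  then show ?thesis using Hsub hopall by blast
qed

end
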